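(* Consider the barotropic two-phase setting described in the context. Let $(\alpha_1,\rho_1,\rho_2,u_1,u_2)$ be a smooth solution, with $\alpha_1\in(0,1)$ and $\rho_1,\rho_2>0$, of the homogeneous one-dimensional conservative SHTC system \begin{align*} &\partial_t(\alpha_1\rho)+\partial_x(\alpha_1\rho u)=0,\qquad \partial_t(\alpha_1\rho_1)+\partial_x(\alpha_1\rho_1u_1)=0,\qquad \partial_t\rho+\partial_x(\rho u)=0,\\ &\partial_t(\alpha_1\rho_1u_1+\alpha_2\rho_2u_2)+\partial_x(\alpha_1\rho_1u_1^2+\alpha_2\rho_2u_2^2+\alpha_1p_1+\alpha_2p_2)=0,\\ &\partial_t w+\partial_x\Big(\tfrac12u_1^2-\tfrac12u_2^2+\Psi_1(\rho_1)-\Psi_2(\rho_2)\Big)=0 . \end{align*} Then $W=(\alpha_1,\rho_1,\rho_2,u_1,u_2)^T$ satisfies $\partial_tW+A(W)\partial_xW=0$ with \[ A(W)=\begin{pmatrix} u & 0 & 0 & 0 & 0\\ \frac{\rho_1}{\alpha_1}(u_1-u) & u_1 & 0 & \rho_1 & 0\\ \frac{\rho_2}{\alpha_2}(u-u_2) & 0 & u_2 & 0 & \rho_2\\ \frac{p_1-p_2}{\rho} & \frac{a_1^2}{\rho_1} & 0 & u_1 & 0\\ \frac{p_1-p_2}{\rho} & 0 & \frac{a_2^2}{\rho_2} & 0 & u_2 \end{pmatrix}. \] Moreover, for every state $W$ with $\alpha_1\in(0,1)$, $\rho_1,\rho_2>0$: (i) $A R_{1\pm}=(u_1\pm a_1)R_{1\pm}$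 and $A R_{2\pm}=(u_2\pm a_2)R_{2\pm}$, where $R_{1\pm}=(0,1,0,\pm a_1/\rho_1,0)^T$ and $R_{2\pm}=(0,0,1,0,\pm a_2/\rho_2)^T$; (ii) $A R_C=u\,R_C$, where $R_C=\big(\varepsilon_1\varepsilon_2,\ \delta_1\varepsilon_2,\ \delta_2\varepsilon_1,\ (u-u_1)\varepsilon_2\gamma_1,\ -(u-u_2)\varepsilon_1\gamma_2\big)^T$ with $\delta_1=\frac{p_1-p_2}{\rho}-\frac{(u-u_1)^2}{\alpha_1}$, $\delta_2=\frac{p_1-p_2}{\rho}+\frac{(u-u_2)^2}{\alpha_2}$, $\varepsilon_i=\frac{(u-u_i)^2-a_i^2}{\rho_i}$, $\gamma_1=\frac{\alpha_1(p_1-p_2)-\rho a_1^2}{\alpha_1\rho_1\rho}$, $\gamma_2=-\frac{\alpha_2(p_1-p_2)+\rho a_2^2}{\alpha_2\rho_2\rho}$; (iii) viewing $\lambda_{i\pm}=u_i\pm a_i(\rho_i)$ and $\lambda_C=u=(\alpha_1\rho_1u_1+\alpha_2\rho_2u_2)/(\alpha_1\rho_1+\alpha_2\rho_2)$ as functions of $W$, one has $\nabla_W\lambda_{i\pm}\cdot R_{i\pm}=\pm\frac{1}{\rho_i}\frac{d(\rho_ia_i(\rho_i))}{d\rho_i}$ for $i=1,2$, and $\nabla_W\lambda_C\cdot R_C=0$ identically (the field associated with $\lambda_C$ is linearly degenerate).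
   Context: For $i=1,2$ let $p_i:(0,\infty)\to\mathbb{R}$ be smooth with $p_i'>0$, and let $a_i(\rho_i)=\sqrt{p_i'(\rho_i)}$ be the phase sound speed. Let $\varphi_i$ be an antiderivative of $\rho\mapsto p_i(\rho)/\rho^2$ and $\Psi_i(\rho)=\varphi_i(\rho)+p_i(\rho)/\rho$, so $\Psi_i'=a_i^2/\rho$ (in the isentropic case $\varphi_i$ is the specific internal energy and $\Psi_i$ the specific enthalpy; in the isothermal case $\varphi_i$ is the specific free energy and $\Psi_i$ the specific Gibbs energy). Primitive variables: volume fraction $\alpha_1\in(0,1)$, phase densities $\rho_1,\rho_2>0$, phase velocities $u_1,u_2$. Derived quantities: $\alpha_2=1-\alpha_1$, $\rho=\alpha_1\rho_1+\alpha_2\rho_2$, $c_i=\alpha_i\rho_i/\rho$, $u=c_1u_1+c_2u_2$, $w=u_1-u_2$, $p_i=p_i(\rho_i)$, $a_i=a_i(\rho_i)$. *)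

theory Defs
  imports "HOL-Analysis.Analysis"
begin

text \<open>State vector W = (alpha1, rho1, rho2, u1, u2) :: real^5, components W$1..W$5.
  Pressure laws p1, p2 are passed as parameters.\<close>

definition snd_speed :: "(real \<Rightarrow> real) \<Rightarrow> real \<Rightarrow> real" where
  "snd_speed p r = sqrt (deriv p r)"

definition Psi :: "(real \<Rightarrow> real) \<Rightarrow> (real \<Rightarrow> real) \<Rightarrow> real \<Rightarrow> real" where
  "Psi p phi r = phi r + p r / r"

definition admissible :: "real^5 \<Rightarrow> bool" where
  "admissible W \<longleftrightarrow> 0 < W$1 \<and> W$1 < 1 \<and> 0 < W$2 \<and> 0 < W$3"

definition mix_rho :: "real^5 \<Rightarrow> real" where
  "mix_rho W = W$1 * W$2 + (1 - W$1) * W$3"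

definition mix_u :: "real^5 \<Rightarrow> real" where
  "mix_u W = (W$1 * W$2 * W$4 + (1 - W$1) * W$3 * W$5) / mix_rho W"

definition Amat :: "(real \<Rightarrow> real) \<Rightarrow> (real \<Rightarrow> real) \<Rightarrow> real^5 \<Rightarrow> real^5^5" where
  "Amat p1 p2 W =
    (let a1 = W$1; r1 = W$2; r2 = W$3; v1 = W$4; v2 = W$5; a2 = 1 - a1;
         r = mix_rho W; u = mix_u W; dp = p1 r1 - p2 r2;
         c1 = snd_speed p1 r1; c2 = snd_speed p2 r2
     in vector [
       vector [u, 0, 0, 0, 0],
       vector [r1 / a1 * (v1 - u), v1, 0, r1, 0],
       vector [r2 / a2 * (u - v2), 0, v2, 0, r2],
       vector [dp / r, c1^2 / r1, 0, v1, 0],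
       vector [dp / r, 0, c2^2 / r2, 0, v2]])"

definition R1 :: "(real \<Rightarrow> real) \<Rightarrow> real \<Rightarrow> real^5 \<Rightarrow> real^5" where
  "R1 p1 s W = vector [0, 1, 0, s * snd_speed p1 (W$2) / W$2, 0]"

definition R2 :: "(real \<Rightarrow> real) \<Rightarrow> real \<Rightarrow> real^5 \<Rightarrow> real^5" where
  "R2 p2 s W = vector [0, 0, 1, 0, s * snd_speed p2 (W$3) / W$3]"

definition RC :: "(real \<Rightarrow> real) \<Rightarrow> (real \<Rightarrow> real) \<Rightarrow> real^5 \<Rightarrow> real^5" where
  "RC p1 p2 W =
    (let a1 = W$1; r1 = W$2; r2 = W$3; v1 = W$4; v2 = W$5; a2 = 1 - a1;
         r = mix_rho W; u = mix_u W; dp = p1 r1 - p2 r2;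
         c1 = snd_speed p1 r1; c2 = snd_speed p2 r2;
         d1 = dp / r - (u - v1)^2 / a1;
         d2 = dp / r + (u - v2)^2 / a2;
         e1 = ((u - v1)^2 - c1^2) / r1;
         e2 = ((u - v2)^2 - c2^2) / r2;
         g1 = (a1 * dp - r * c1^2) / (a1 * r1 * r);
         g2 = - (a2 * dp + r * c2^2) / (a2 * r2 * r)
     in vector [e1 * e2, d1 * e2, d2 * e1, (u - v1) * e2 * g1, - (u - v2) * e1 * g2])"

definition lam1 :: "(real \<Rightarrow> real) \<Rightarrow> real \<Rightarrow> real^5 \<Rightarrow> real" where
  "lam1 p1 s W = W$4 + s * snd_speed p1 (W$2)"

definition lam2 :: "(real \<Rightarrow> real) \<Rightarrow> real \<Rightarrow> real^5 \<Rightarrow> real" where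
  "lam2 p2 s W = W$5 + s * snd_speed p2 (W$3)"

definition lamC :: "real^5 \<Rightarrow> real" where
  "lamC W = mix_u W"

definition pdt :: "(real \<times> real \<Rightarrow> 'a::real_normed_vector) \<Rightarrow> real \<times> real \<Rightarrow> 'a" where
  "pdt f z = vector_derivative (\<lambda>s. f (s, snd z)) (at (fst z))"

definition pdx :: "(real \<times> real \<Rightarrow> 'a::real_normed_vector) \<Rightarrow> real \<times> real \<Rightarrow> 'a" where
  "pdx f z = vector_derivative (\<lambda>y. f (fst z, y)) (at (snd z))"

definition smooth2_on :: "(real \<times> real) set \<Rightarrow> (real \<times> real \<Rightarrow> real) \<Rightarrow> bool" where
  "smooth2_on S f \<longleftrightarrow>
     (\<forall>ds :: bool list. \<forall>z\<in>S.
        (foldr (\<lambda>b g. if b then pdt g else pdx g) ds f) differentiable (at z))"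

end

theory Submission
  imports Defs
begin

lemma exhaust_5:
  fixes x :: 5
  shows "x = 1 \<or> x = 2 \<or> x = 3 \<or> x = 4 \<or> x = 5"
proof (induct x)
  case (of_int z)
  then have "z = 0 \<or> z = 1 \<or> z = 2 \<or> z = 3 \<or> z = 4" by simp presburger
  then show ?case by (elim disjE) simp_all
qed
lemma UNIV_5: "UNIV = {1, 2, 3, 4, 5::5}"
  using exhaust_5 by blast
lemma sum_5: "sum f (UNIV::5 set) = f 1 + f 2 + f 3 + f 4 + f 5"
  unfolding UNIV_5 by (simp add: ac_simps)
lemma vec5_eq: "(x::'a^5) = y \<longleftrightarrow> x$1 = y$1 \<and> x$2 = y$2 \<and> x$3 = y$3 \<and> x$4 = y$4 \<and> x$5 = y$5"
proof
  assume h: "x$1 = y$1 \<and> x$2 = y$2 \<and> x$3 = y$3 \<and> x$4 = y$4 \<and> x$5 = y$5"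
  show "x = y" unfolding vec_eq_iff
  proof
    fix i :: 5
    show "x$i = y$i" using exhaust_5[of i] h by (elim disjE) auto
  qed
qed simp
lemma mv5: "((A::real^5^5) *v x) $ i = A$i$1 * x$1 + A$i$2 * x$2 + A$i$3 * x$3 + A$i$4 * x$4 + A$i$5 * x$5"
  by (simp add: matrix_vector_mult_def sum_5)
lemma vector_5 [simp]:
 "(vector [a,b,c,d,e] ::('a::zero)^5)$1 = a"
 "(vector [a,b,c,d,e] ::('a::zero)^5)$2 = b"
 "(vector [a,b,c,d,e] ::('a::zero)^5)$3 = c"
 "(vector [a,b,c,d,e] ::('a::zero)^5)$4 = d"
 "(vector [a,b,c,d,e] ::('a::zero)^5)$5 = e"
  unfolding vector_def by simp_all
lemma rc_alg:
  fixes a b c v w dp ka kb r u d1 d2 e1 e2 g1 g2 :: real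
  assumes a: "0 < a" "a < 1" and b: "0 < b" and c: "0 < c"
  assumes r_def: "r = a*b + (1-a)*c"
  assumes u_def: "u = (a*b * v + (1-a)*c*w)/r"
  assumes d1_def: "d1 = dp / r - (u - v)^2 / a"
  assumes d2_def: "d2 = dp / r + (u - w)^2 / (1-a)"
  assumes e1_def: "e1 = ((u - v)^2 - ka) / b"
  assumes e2_def: "e2 = ((u - w)^2 - kb) / c"
  assumes g1_def: "g1 = (a * dp - r * ka) / (a * b * r)"
  assumes g2_def: "g2 = - ((1-a) * dp + r * kb) / ((1-a) * c * r)"
  shows "b / a * (v - u) * (e1*e2) + v * (d1*e2) + b * ((u - v) * e2 * g1) = u * (d1*e2)"
    "c / (1-a) * (u - w) * (e1*e2) + w * (d2*e1) + c * (- (u - w) * e1 * g2) = u * (d2*e1)"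
    "dp / r * (e1*e2) + ka / b * (d1*e2) + v * ((u - v) * e2 * g1) = u * ((u - v) * e2 * g1)"
    "dp / r * (e1*e2) + kb / c * (d2*e1) + w * (- (u - w) * e1 * g2) = u * (- (u - w) * e1 * g2)"
    "((b*(v-u) - c*(w-u)) * (e1*e2) + a*(v-u)*(d1*e2) + (1-a)*(w-u)*(d2*e1) + a*b*((u - v) * e2 * g1) + (1-a)*c*(- (u - w) * e1 * g2)) = 0"
proof -
  have r: "r > 0" unfolding r_def using a b c by (simp add: add_pos_pos)
  have a2: "1 - a > 0" using a by simp
  have B1: "b * e1 / a + d1 - b * g1 = 0"
    unfolding e1_def d1_def g1_def using a b r by (simp add: field_simps)
  have B2: "- c * e2 + (1-a) * d2 + (1-a) * c * g2 = 0"
    unfolding e2_def d2_def g2_def using a2 c r by (simp add: field_simps)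
  have B3: "dp / r * e1 + ka / b * d1 - (u-v)^2 * g1 = 0"
    unfolding e1_def d1_def g1_def using a b r by (simp add: field_simps power2_eq_square)
  have B4: "dp / r * e2 + kb / c * d2 + (u-w)^2 * g2 = 0"
    unfolding e2_def d2_def g2_def using a2 c r by (simp add: field_simps power2_eq_square)
  show "b / a * (v - u) * (e1*e2) + v * (d1*e2) + b * ((u - v) * e2 * g1) = u * (d1*e2)"
  proof -
    have "b / a * (v - u) * (e1*e2) + v * (d1*e2) + b * ((u - v) * e2 * g1) - u * (d1*e2)
        = (v - u) * e2 * (b * e1 / a + d1 - b * g1)" using a by (simp add: field_simps)
    then show ?thesis using B1 by simp
  qed
  show "c / (1-a) * (u - w) * (e1*e2) + w * (d2*e1) + c * (- (u - w) * e1 * g2) = u * (d2*e1)"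
  proof -
    have "c / (1-a) * (u - w) * (e1*e2) + w * (d2*e1) + c * (- (u - w) * e1 * g2) - u * (d2*e1)
        = (u - w) * e1 / (1-a) * (c * e2 - (1-a) * d2 - (1-a) * c * g2)" using a2 by (simp add: field_simps)
    moreover have "c * e2 - (1-a) * d2 - (1-a) * c * g2 = 0" using B2 by linarith
    ultimately show ?thesis by (simp add: right_diff_distrib)
  qed
  show "dp / r * (e1*e2) + ka / b * (d1*e2) + v * ((u - v) * e2 * g1) = u * ((u - v) * e2 * g1)"
  proof -
    have "dp / r * (e1*e2) + ka / b * (d1*e2) + v * ((u - v) * e2 * g1) - u * ((u - v) * e2 * g1)
        = e2 * (dp / r * e1 + ka / b * d1 - (u-v)^2 * g1)" by (simp add: algebra_simps power2_eq_square)
    then show ?thesis using B3 by simp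
  qed
  show "dp / r * (e1*e2) + kb / c * (d2*e1) + w * (- (u - w) * e1 * g2) = u * (- (u - w) * e1 * g2)"
  proof -
    have "dp / r * (e1*e2) + kb / c * (d2*e1) + w * (- (u - w) * e1 * g2) - u * (- (u - w) * e1 * g2)
        = e1 * (dp / r * e2 + kb / c * d2 + (u-w)^2 * g2)" by (simp add: algebra_simps power2_eq_square)
    then show ?thesis using B4 by simp
  qed
  show "((b*(v-u) - c*(w-u)) * (e1*e2) + a*(v-u)*(d1*e2) + (1-a)*(w-u)*(d2*e1) + a*b*((u - v) * e2 * g1) + (1-a)*c*(- (u - w) * e1 * g2)) = 0"
  proof -
    have "(b*(v-u) - c*(w-u)) * (e1*e2) + a*(v-u)*(d1*e2) + (1-a)*(w-u)*(d2*e1) + a*b*((u - v) * e2 * g1) + (1-a)*c*(- (u - w) * e1 * g2)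
       = a * (v-u) * e2 * (b * e1 / a + d1 - b * g1) + (w - u) * e1 * (- c * e2 + (1-a) * d2 + (1-a) * c * g2)"
      using a by (simp add: field_simps)
    then show ?thesis using B1 B2 by simp
  qed
qed

lemma snd_speed_sq: "0 < deriv p r \<Longrightarrow> (snd_speed p r)^2 = deriv p r"
  unfolding snd_speed_def by simp

lemma has_derivative_nth: "((\<lambda>x::real^'n. x $ i) has_derivative (\<lambda>h. h $ i)) F"
  by (rule bounded_linear_imp_has_derivative) (rule bounded_linear_vec_nth)

lemma lam_deriv:
  fixes p :: "real \<Rightarrow> real" and W :: "real^5" and k j :: 5 and s :: real
  assumes sm: "\<And>n r. r > 0 \<Longrightarrow> ((deriv ^^ n) p) differentiable (at r)"
    and mono: "\<And>r. r > 0 \<Longrightarrow> deriv p r > 0"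
    and pos: "W$k > 0" and s: "s \<in> {-1, 1}"
  shows "(\<lambda>W. W$j + s * snd_speed p (W$k)) differentiable (at W)
     \<and> frechet_derivative (\<lambda>W. W$j + s * snd_speed p (W$k)) (at W) X
        = X$j + s * X$k * (deriv (deriv p) (W$k) / (2 * sqrt (deriv p (W$k))))"
     "DERIV (\<lambda>r. r * snd_speed p r) (W$k) :> snd_speed p (W$k) + W$k * (deriv (deriv p) (W$k) / (2 * sqrt (deriv p (W$k))))"
proof -
  let ?r = "W$k"
  have d1: "DERIV (deriv p) ?r :> deriv (deriv p) ?r"
    using sm[of ?r 1] pos by (simp add: DERIV_deriv_iff_real_differentiable)
  have d2: "DERIV (snd_speed p) ?r :> deriv (deriv p) ?r / (2 * sqrt (deriv p ?r))"
    unfolding snd_speed_def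
    using DERIV_chain2[OF DERIV_real_sqrt[OF mono[OF pos]] d1] by (simp add: field_simps)
  have hd: "((\<lambda>W. W$j + s * snd_speed p (W$k)) has_derivative
        (\<lambda>h. h$j + s * (h$k * (deriv (deriv p) ?r / (2 * sqrt (deriv p ?r)))))) (at W)"
  proof -
    have hc: "((\<lambda>W. snd_speed p (W$k)) has_derivative (\<lambda>h. h$k * (deriv (deriv p) ?r / (2 * sqrt (deriv p ?r))))) (at W)"
      using DERIV_compose_FDERIV[where f="snd_speed p" and g="\<lambda>W. W$k" and x=W, OF d2 has_derivative_nth] .
    show ?thesis
      using has_derivative_add[OF has_derivative_nth[of j] has_derivative_mult_right[OF hc, of s]] by simp
  qed
  show "(\<lambda>W. W$j + s * snd_speed p (W$k)) differentiable (at W)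
     \<and> frechet_derivative (\<lambda>W. W$j + s * snd_speed p (W$k)) (at W) X
        = X$j + s * X$k * (deriv (deriv p) (W$k) / (2 * sqrt (deriv p (W$k))))"
    using hd frechet_derivative_at[OF hd, symmetric] unfolding differentiable_def by auto
  show "DERIV (\<lambda>r. r * snd_speed p r) (W$k) :> snd_speed p (W$k) + W$k * (deriv (deriv p) (W$k) / (2 * sqrt (deriv p (W$k))))"
    using DERIV_mult[OF DERIV_ident d2] by (simp add: mult.commute)
qed


lemma W_part:
  fixes p1 p2 :: "real \<Rightarrow> real" and W :: "real^5"
  assumes p1_smooth: "\<And>n r. r > 0 \<Longrightarrow> ((deriv ^^ n) p1) differentiable (at r)"
    and p2_smooth: "\<And>n r. r > 0 \<Longrightarrow> ((deriv ^^ n) p2) differentiable (at r)"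
    and p1_mono: "\<And>r. r > 0 \<Longrightarrow> deriv p1 r > 0"
    and p2_mono: "\<And>r. r > 0 \<Longrightarrow> deriv p2 r > 0"
    and adm: "admissible W"
  shows "(\<forall>s\<in>{-1, 1::real}.
                Amat p1 p2 W *v R1 p1 s W = (W$4 + s * snd_speed p1 (W$2)) *s R1 p1 s W
              \<and> Amat p1 p2 W *v R2 p2 s W = (W$5 + s * snd_speed p2 (W$3)) *s R2 p2 s W)
          \<and> Amat p1 p2 W *v RC p1 p2 W = mix_u W *s RC p1 p2 W
          \<and> (\<forall>s\<in>{-1, 1::real}.
                lam1 p1 s differentiable (at W)
              \<and> frechet_derivative (lam1 p1 s) (at W) (R1 p1 s W)
                  = s * (1 / W$2) * deriv (\<lambda>r. r * snd_speed p1 r) (W$2)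
              \<and> lam2 p2 s differentiable (at W)
              \<and> frechet_derivative (lam2 p2 s) (at W) (R2 p2 s W)
                  = s * (1 / W$3) * deriv (\<lambda>r. r * snd_speed p2 r) (W$3))
          \<and> lamC differentiable (at W)
          \<and> frechet_derivative lamC (at W) (RC p1 p2 W) = 0"
proof -
  have a1: "0 < W$1" and a2: "W$1 < 1" and b: "0 < W$2" and c: "0 < W$3"
    using adm unfolding admissible_def by auto
  have k1: "(snd_speed p1 (W$2))^2 = deriv p1 (W$2)" using snd_speed_sq p1_mono b by blast
  have k2: "(snd_speed p2 (W$3))^2 = deriv p2 (W$3)" using snd_speed_sq p2_mono c by blast
  have r: "mix_rho W > 0" unfolding mix_rho_def using a1 a2 b c by (simp add: add_pos_pos)
  have s2: "s * s = 1" if "s \<in> {-1, 1::real}" for s using that by auto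
  have E1: "(\<forall>s\<in>{-1, 1::real}.
                Amat p1 p2 W *v R1 p1 s W = (W$4 + s * snd_speed p1 (W$2)) *s R1 p1 s W
              \<and> Amat p1 p2 W *v R2 p2 s W = (W$5 + s * snd_speed p2 (W$3)) *s R2 p2 s W)"
  proof (intro ballI conjI)
    fix s :: real assume s: "s \<in> {-1, 1}"
    show "Amat p1 p2 W *v R1 p1 s W = (W$4 + s * snd_speed p1 (W$2)) *s R1 p1 s W"
      unfolding vec5_eq mv5 Amat_def R1_def Let_def
      using s2[OF s] b by (simp add: field_simps power2_eq_square)
    show "Amat p1 p2 W *v R2 p2 s W = (W$5 + s * snd_speed p2 (W$3)) *s R2 p2 s W"
      unfolding vec5_eq mv5 Amat_def R2_def Let_def
      using s2[OF s] c by (simp add: field_simps power2_eq_square)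
  qed
  define r where "r = mix_rho W"
  define u where "u = mix_u W"
  define dp where "dp = p1 (W$2) - p2 (W$3)"
  define ca where "ca = snd_speed p1 (W$2)"
  define cb where "cb = snd_speed p2 (W$3)"
  define d1 where "d1 = dp / r - (u - W$4)^2 / W$1"
  define d2 where "d2 = dp / r + (u - W$5)^2 / (1 - W$1)"
  define e1 where "e1 = ((u - W$4)^2 - ca^2) / W$2"
  define e2 where "e2 = ((u - W$5)^2 - cb^2) / W$3"
  define g1 where "g1 = (W$1 * dp - r * ca^2) / (W$1 * W$2 * r)"
  define g2 where "g2 = - ((1 - W$1) * dp + r * cb^2) / ((1 - W$1) * W$3 * r)"
  have r_eq: "r = W$1 * W$2 + (1 - W$1) * W$3" unfolding r_def mix_rho_def ..
  have u_eq: "u = (W$1 * W$2 * W$4 + (1 - W$1) * W$3 * W$5) / r" unfolding u_def r_def mix_u_def ..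
  note RA = rc_alg[OF a1 a2 b c r_eq u_eq d1_def d2_def e1_def e2_def g1_def g2_def]
  have RCe: "RC p1 p2 W = vector [e1*e2, d1*e2, d2*e1, (u - W$4) * e2 * g1, - (u - W$5) * e1 * g2]"
    unfolding RC_def Let_def r_def u_def dp_def ca_def cb_def d1_def d2_def e1_def e2_def g1_def g2_def ..
  have Ae: "Amat p1 p2 W = vector [
       vector [u, 0, 0, 0, 0],
       vector [W$2 / W$1 * (W$4 - u), W$4, 0, W$2, 0],
       vector [W$3 / (1 - W$1) * (u - W$5), 0, W$5, 0, W$3],
       vector [dp / r, ca^2 / W$2, 0, W$4, 0],
       vector [dp / r, 0, cb^2 / W$3, 0, W$5]]"
    unfolding Amat_def Let_def r_def u_def dp_def ca_def cb_def ..
  have E2: "Amat p1 p2 W *v RC p1 p2 W = mix_u W *s RC p1 p2 W"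
    unfolding vec5_eq mv5 Ae RCe u_def[symmetric]
    using RA(1-4) by simp
  have E3: "lam1 p1 s differentiable (at W)
              \<and> frechet_derivative (lam1 p1 s) (at W) (R1 p1 s W)
                  = s * (1 / W$2) * deriv (\<lambda>r. r * snd_speed p1 r) (W$2)
              \<and> lam2 p2 s differentiable (at W)
              \<and> frechet_derivative (lam2 p2 s) (at W) (R2 p2 s W)
                  = s * (1 / W$3) * deriv (\<lambda>r. r * snd_speed p2 r) (W$3)"
    if s: "s \<in> {-1, 1::real}" for s
  proof -
    have l1: "lam1 p1 s = (\<lambda>W. W$4 + s * snd_speed p1 (W$2))" by (rule ext) (simp add: lam1_def)
    have l2: "lam2 p2 s = (\<lambda>W. W$5 + s * snd_speed p2 (W$3))" by (rule ext) (simp add: lam2_def)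
    note L1 = lam_deriv(1)[where j=4 and X="R1 p1 s W", OF p1_smooth p1_mono b s] lam_deriv(2)[OF p1_smooth p1_mono b s]
    note L2 = lam_deriv(1)[where j=5 and X="R2 p2 s W", OF p2_smooth p2_mono c s] lam_deriv(2)[OF p2_smooth p2_mono c s]
    show ?thesis unfolding l1 l2
      using L1(1) L2(1) DERIV_imp_deriv[OF L1(2)] DERIV_imp_deriv[OF L2(2)] b c s2[OF s]
      by (simp add: R1_def R2_def field_simps)
  qed
  have hd: "(mix_u has_derivative (\<lambda>h. (h$1*(W$2*(W$4-mix_u W) - W$3*(W$5-mix_u W)) + W$1*(W$4-mix_u W)*h$2
         + (1-W$1)*(W$5-mix_u W)*h$3 + W$1*W$2*h$4 + (1-W$1)*W$3*h$5) / mix_rho W)) (at W)"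
  proof -
    have "(mix_u has_derivative (\<lambda>h. ((h$1*W$2*W$4 + W$1*h$2*W$4 + W$1*W$2*h$4 - h$1*W$3*W$5 + (1-W$1)*h$3*W$5 + (1-W$1)*W$3*h$5) * mix_rho W
        - (W$1*W$2*W$4 + (1-W$1)*W$3*W$5) * (h$1*W$2 + W$1*h$2 - h$1*W$3 + (1-W$1)*h$3)) / (mix_rho W)^2)) (at W)"
      unfolding mix_u_def[abs_def] mix_rho_def
      using r unfolding mix_rho_def
      by (auto intro!: derivative_eq_intros has_derivative_nth simp: fun_eq_iff field_simps power2_eq_square)
    moreover have "(\<lambda>h::real^5. ((h$1*W$2*W$4 + W$1*h$2*W$4 + W$1*W$2*h$4 - h$1*W$3*W$5 + (1-W$1)*h$3*W$5 + (1-W$1)*W$3*h$5) * mix_rho W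
        - (W$1*W$2*W$4 + (1-W$1)*W$3*W$5) * (h$1*W$2 + W$1*h$2 - h$1*W$3 + (1-W$1)*h$3)) / (mix_rho W)^2)
       = (\<lambda>h::real^5. (h$1*(W$2*(W$4-mix_u W) - W$3*(W$5-mix_u W)) + W$1*(W$4-mix_u W)*h$2
         + (1-W$1)*(W$5-mix_u W)*h$3 + W$1*W$2*h$4 + (1-W$1)*W$3*h$5) / mix_rho W)"
      using r unfolding mix_u_def by (auto simp: fun_eq_iff field_simps power2_eq_square)
    ultimately show ?thesis by simp
  qed
  have E4: "lamC differentiable (at W) \<and> frechet_derivative lamC (at W) (RC p1 p2 W) = 0"
  proof
    have lc: "lamC = mix_u" by (rule ext) (simp add: lamC_def)
    show "lamC differentiable (at W)" unfolding lc differentiable_def using hd by blast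
    have "frechet_derivative lamC (at W) (RC p1 p2 W) = ((RC p1 p2 W)$1*(W$2*(W$4-mix_u W) - W$3*(W$5-mix_u W)) + W$1*(W$4-mix_u W)*(RC p1 p2 W)$2
         + (1-W$1)*(W$5-mix_u W)*(RC p1 p2 W)$3 + W$1*W$2*(RC p1 p2 W)$4 + (1-W$1)*W$3*(RC p1 p2 W)$5) / mix_rho W"
      unfolding lc frechet_derivative_at[OF hd, symmetric] by simp
    also have "... = 0"
    proof -
      have "(RC p1 p2 W)$1*(W$2*(W$4-u) - W$3*(W$5-u)) + W$1*(W$4-u)*(RC p1 p2 W)$2
         + (1-W$1)*(W$5-u)*(RC p1 p2 W)$3 + W$1*W$2*(RC p1 p2 W)$4 + (1-W$1)*W$3*(RC p1 p2 W)$5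
         = (W$2*(W$4-u) - W$3*(W$5-u)) * (e1*e2) + W$1*(W$4-u)*(d1*e2) + (1-W$1)*(W$5-u)*(d2*e1)
           + W$1*W$2*((u - W$4) * e2 * g1) + (1-W$1)*W$3*(- (u - W$5) * e1 * g2)"
        unfolding RCe vector_5 by (simp add: algebra_simps)
      then show ?thesis using RA(5) unfolding u_def by simp
    qed
    finally show "frechet_derivative lamC (at W) (RC p1 p2 W) = 0" .
  qed
  show ?thesis using E1 E2 E3 E4 by blast
qed
lemma smooth_diff: "smooth2_on S f \<Longrightarrow> z \<in> S \<Longrightarrow> f differentiable (at z)"
  unfolding smooth2_on_def by (drule spec[of _ "[]"]) simp

lemma pdt_has:
  assumes "f differentiable (at z)"
  shows "((\<lambda>s. f (s, snd z)) has_real_derivative pdt f z) (at (fst z))"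
proof -
  have "(\<lambda>s. (s, snd z)) differentiable (at (fst z))"
    unfolding differentiable_def using has_derivative_Pair[OF has_derivative_ident has_derivative_const] by blast
  moreover have "f differentiable (at ((\<lambda>s. (s, snd z)) (fst z)))" using assms by simp
  ultimately have "(f \<circ> (\<lambda>s. (s, snd z))) differentiable (at (fst z))"
    by (rule differentiable_chain_at)
  then have "(\<lambda>s. f (s, snd z)) differentiable (at (fst z))" by (simp add: o_def)
  then show ?thesis unfolding pdt_def has_real_derivative_iff_has_vector_derivative
    by (simp add: vector_derivative_works)
qed

lemma pdx_has:
  assumes "f differentiable (at z)"
  shows "((\<lambda>y. f (fst z, y)) has_real_derivative pdx f z) (at (snd z))"
proof -
  have "(\<lambda>y. (fst z, y)) differentiable (at (snd z))"
    unfolding differentiable_def using has_derivative_Pair[OF has_derivative_const has_derivative_ident] by blast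
  moreover have "f differentiable (at ((\<lambda>y. (fst z, y)) (snd z)))" using assms by simp
  ultimately have "(f \<circ> (\<lambda>y. (fst z, y))) differentiable (at (snd z))"
    by (rule differentiable_chain_at)
  then have "(\<lambda>y. f (fst z, y)) differentiable (at (snd z))" by (simp add: o_def)
  then show ?thesis unfolding pdx_def has_real_derivative_iff_has_vector_derivative
    by (simp add: vector_derivative_works)
qed

lemma pdt_eq: "((\<lambda>s. g (s, snd z)) has_real_derivative D) (at (fst z)) \<Longrightarrow> pdt g z = D"
  unfolding pdt_def has_real_derivative_iff_has_vector_derivative by (rule vector_derivative_at)

lemma pdx_eq: "((\<lambda>y. g (fst z, y)) has_real_derivative D) (at (snd z)) \<Longrightarrow> pdx g z = D"
  unfolding pdx_def has_real_derivative_iff_has_vector_derivative by (rule vector_derivative_at)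

lemma pdt_veq: "((\<lambda>s. g (s, snd z)) has_vector_derivative D) (at (fst z)) \<Longrightarrow> pdt g z = D"
  unfolding pdt_def by (rule vector_derivative_at)

lemma pdx_veq: "((\<lambda>y. g (fst z, y)) has_vector_derivative D) (at (snd z)) \<Longrightarrow> pdx g z = D"
  unfolding pdx_def by (rule vector_derivative_at)

lemma Psi_deriv:
  assumes p: "p differentiable (at r)" and phi: "(phi has_real_derivative p r / r^2) (at r)" and r: "r > 0"
  shows "(Psi p phi has_real_derivative deriv p r / r) (at r)"
proof -
  have dp: "(p has_real_derivative deriv p r) (at r)" using p by (simp add: DERIV_deriv_iff_real_differentiable)
  have "((\<lambda>r. phi r + p r / r) has_real_derivative (p r / r^2 + (deriv p r * r - p r * 1) / (r * r))) (at r)"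
    by (intro DERIV_add phi DERIV_divide dp DERIV_ident) (use r in simp)
  moreover have "p r / r^2 + (deriv p r * r - p r * 1) / (r * r) = deriv p r / r"
    using r by (simp add: field_simps power2_eq_square)
  ultimately show ?thesis unfolding Psi_def[abs_def] by simp
qed



lemma vec_hvd:
  fixes f1 f2 f3 f4 f5 :: "real \<Rightarrow> real"
  assumes "(f1 has_real_derivative d1) (at t)" "(f2 has_real_derivative d2) (at t)"
    "(f3 has_real_derivative d3) (at t)" "(f4 has_real_derivative d4) (at t)"
    "(f5 has_real_derivative d5) (at t)"
  shows "((\<lambda>s. vector [f1 s, f2 s, f3 s, f4 s, f5 s] :: real^5) has_vector_derivative vector [d1, d2, d3, d4, d5]) (at t)"
proof -
  define E1 where "E1 = (vector [1, 0, 0, 0, 0] :: real^5)"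
  define E2 where "E2 = (vector [0, 1, 0, 0, 0] :: real^5)"
  define E3 where "E3 = (vector [0, 0, 1, 0, 0] :: real^5)"
  define E4 where "E4 = (vector [0, 0, 0, 1, 0] :: real^5)"
  define E5 where "E5 = (vector [0, 0, 0, 0, 1] :: real^5)"
  have dec: "(vector [x1, x2, x3, x4, x5] :: real^5) = x1 *\<^sub>R E1 + x2 *\<^sub>R E2 + x3 *\<^sub>R E3 + x4 *\<^sub>R E4 + x5 *\<^sub>R E5"
    for x1 x2 x3 x4 x5 :: real
    unfolding vec5_eq E1_def E2_def E3_def E4_def E5_def by simp
  have "((\<lambda>s. f1 s *\<^sub>R E1 + f2 s *\<^sub>R E2 + f3 s *\<^sub>R E3 + f4 s *\<^sub>R E4 + f5 s *\<^sub>R E5) has_vector_derivative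
        (d1 *\<^sub>R E1 + d2 *\<^sub>R E2 + d3 *\<^sub>R E3 + d4 *\<^sub>R E4 + d5 *\<^sub>R E5)) (at t)"
    by (auto intro!: derivative_eq_intros assms)
  then show ?thesis unfolding dec .
qed

lemma pde_point:
  fixes p1 p2 phi1 phi2 :: "real \<Rightarrow> real"
    and al r1 r2 v1 v2 :: "real \<times> real \<Rightarrow> real" and z :: "real \<times> real"
  assumes dal: "al differentiable (at z)" and dr1: "r1 differentiable (at z)" and dr2: "r2 differentiable (at z)"
    and dv1: "v1 differentiable (at z)" and dv2: "v2 differentiable (at z)"
    and dp1: "p1 differentiable (at (r1 z))" and dp2: "p2 differentiable (at (r2 z))"
    and mono1: "deriv p1 (r1 z) > 0" and mono2: "deriv p2 (r2 z) > 0"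
    and phi1: "(phi1 has_real_derivative p1 (r1 z) / (r1 z)^2) (at (r1 z))"
    and phi2: "(phi2 has_real_derivative p2 (r2 z) / (r2 z)^2) (at (r2 z))"
    and ranges: "0 < al z \<and> al z < 1 \<and> 0 < r1 z \<and> 0 < r2 z"
    and eq1: "pdt (\<lambda>z. al z * (al z * r1 z + (1 - al z) * r2 z)) z
     + pdx (\<lambda>z. al z * (al z * r1 z + (1 - al z) * r2 z)
              * ((al z * r1 z * v1 z + (1 - al z) * r2 z * v2 z) / (al z * r1 z + (1 - al z) * r2 z))) z = 0"
    and eq2: "pdt (\<lambda>z. al z * r1 z) z + pdx (\<lambda>z. al z * r1 z * v1 z) z = 0"
    and eq3: "pdt (\<lambda>z. al z * r1 z + (1 - al z) * r2 z) z
     + pdx (\<lambda>z. al z * r1 z * v1 z + (1 - al z) * r2 z * v2 z) z = 0"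
    and eq4: "pdt (\<lambda>z. al z * r1 z * v1 z + (1 - al z) * r2 z * v2 z) z
     + pdx (\<lambda>z. al z * r1 z * (v1 z)^2 + (1 - al z) * r2 z * (v2 z)^2
                + al z * p1 (r1 z) + (1 - al z) * p2 (r2 z)) z = 0"
    and eq5: "pdt (\<lambda>z. v1 z - v2 z) z
     + pdx (\<lambda>z. (v1 z)^2 / 2 - (v2 z)^2 / 2 + Psi p1 phi1 (r1 z) - Psi p2 phi2 (r2 z)) z = 0"
  shows "pdt (\<lambda>z. vector [al z, r1 z, r2 z, v1 z, v2 z]) z
          + Amat p1 p2 (vector [al z, r1 z, r2 z, v1 z, v2 z])
              *v pdx (\<lambda>z. vector [al z, r1 z, r2 z, v1 z, v2 z]) z = (0 :: real^5)"
proof -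
  define a where "a = al z"
  define b where "b = r1 z"
  define c where "c = r2 z"
  define v where "v = v1 z"
  define w where "w = v2 z"
  define aT where "aT = pdt al z"
  define bT where "bT = pdt r1 z"
  define cT where "cT = pdt r2 z"
  define vT where "vT = pdt v1 z"
  define wT where "wT = pdt v2 z"
  define aX where "aX = pdx al z"
  define bX where "bX = pdx r1 z"
  define cX where "cX = pdx r2 z"
  define vX where "vX = pdx v1 z"
  define wX where "wX = pdx v2 z"
  define K1 where "K1 = deriv p1 b"
  define K2 where "K2 = deriv p2 c"
  define P1 where "P1 = p1 b"
  define P2 where "P2 = p2 c"
  have a0: "0 < a" and a1: "a < 1" and b0: "0 < b" and c0: "0 < c"
    using ranges unfolding a_def b_def c_def by auto
  define r where "r = a*b + (1-a)*c"
  have r0: "r > 0" unfolding r_def using a0 a1 b0 c0 by (simp add: add_pos_pos)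
  define m where "m = a*b * v + (1-a)*c*w"
  define u where "u = m / r"
  have At: "((\<lambda>s. al (s, snd z)) has_real_derivative aT) (at (fst z))" unfolding aT_def by (rule pdt_has[OF dal])
  have Bt: "((\<lambda>s. r1 (s, snd z)) has_real_derivative bT) (at (fst z))" unfolding bT_def by (rule pdt_has[OF dr1])
  have Ct: "((\<lambda>s. r2 (s, snd z)) has_real_derivative cT) (at (fst z))" unfolding cT_def by (rule pdt_has[OF dr2])
  have Vt: "((\<lambda>s. v1 (s, snd z)) has_real_derivative vT) (at (fst z))" unfolding vT_def by (rule pdt_has[OF dv1])
  have Wt: "((\<lambda>s. v2 (s, snd z)) has_real_derivative wT) (at (fst z))" unfolding wT_def by (rule pdt_has[OF dv2])
  have Ax: "((\<lambda>y. al (fst z, y)) has_real_derivative aX) (at (snd z))" unfolding aX_def by (rule pdx_has[OF dal])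
  have Bx: "((\<lambda>y. r1 (fst z, y)) has_real_derivative bX) (at (snd z))" unfolding bX_def by (rule pdx_has[OF dr1])
  have Cx: "((\<lambda>y. r2 (fst z, y)) has_real_derivative cX) (at (snd z))" unfolding cX_def by (rule pdx_has[OF dr2])
  have Vx: "((\<lambda>y. v1 (fst z, y)) has_real_derivative vX) (at (snd z))" unfolding vX_def by (rule pdx_has[OF dv1])
  have Wx: "((\<lambda>y. v2 (fst z, y)) has_real_derivative wX) (at (snd z))" unfolding wX_def by (rule pdx_has[OF dv2])
  have DP1: "(p1 has_real_derivative K1) (at (r1 (fst z, snd z)))"
    using dp1 unfolding K1_def b_def by (simp add: DERIV_deriv_iff_real_differentiable)
  have DP2: "(p2 has_real_derivative K2) (at (r2 (fst z, snd z)))"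
    using dp2 unfolding K2_def c_def by (simp add: DERIV_deriv_iff_real_differentiable)
  have DS1: "(Psi p1 phi1 has_real_derivative K1 / b) (at (r1 (fst z, snd z)))"
    using Psi_deriv[OF dp1 phi1] ranges unfolding K1_def b_def by simp
  have DS2: "(Psi p2 phi2 has_real_derivative K2 / c) (at (r2 (fst z, snd z)))"
    using Psi_deriv[OF dp2 phi2] ranges unfolding K2_def c_def by simp
  have P1x: "((\<lambda>y. p1 (r1 (fst z, y))) has_real_derivative K1 * bX) (at (snd z))"
    by (rule DERIV_chain2[OF DP1 Bx])
  have P2x: "((\<lambda>y. p2 (r2 (fst z, y))) has_real_derivative K2 * cX) (at (snd z))"
    by (rule DERIV_chain2[OF DP2 Cx])
  have S1x: "((\<lambda>y. Psi p1 phi1 (r1 (fst z, y))) has_real_derivative K1 / b * bX) (at (snd z))"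
    by (rule DERIV_chain2[OF DS1 Bx])
  have S2x: "((\<lambda>y. Psi p2 phi2 (r2 (fst z, y))) has_real_derivative K2 / c * cX) (at (snd z))"
    by (rule DERIV_chain2[OF DS2 Cx])
  note vals = a_def[symmetric] b_def[symmetric] c_def[symmetric] v_def[symmetric] w_def[symmetric]
  have T1: "pdt (\<lambda>z. al z * (al z * r1 z + (1 - al z) * r2 z)) z = aT*r + a*(aT*b + a*bT - aT*c + (1-a)*cT)"
    by (rule pdt_eq) (auto intro!: derivative_eq_intros At Bt Ct simp: vals r_def algebra_simps)
  define rX where "rX = aX*b + a*bX - aX*c + (1-a)*cX"
  define mX where "mX = aX*b * v + a*bX* v + a*b * vX - aX*c*w + (1-a)*cX*w + (1-a)*c*wX"
  have Rx: "((\<lambda>y. al (fst z, y) * r1 (fst z, y) + (1 - al (fst z, y)) * r2 (fst z, y)) has_real_derivative rX) (at (snd z))"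
    by (auto intro!: derivative_eq_intros Ax Bx Cx simp: vals rX_def algebra_simps)
  have Mx: "((\<lambda>y. al (fst z, y) * r1 (fst z, y) * v1 (fst z, y) + (1 - al (fst z, y)) * r2 (fst z, y) * v2 (fst z, y)) has_real_derivative mX) (at (snd z))"
    by (auto intro!: derivative_eq_intros Ax Bx Cx Vx Wx simp: vals mX_def algebra_simps)
  have rz: "al (fst z, snd z) * r1 (fst z, snd z) + (1 - al (fst z, snd z)) * r2 (fst z, snd z) = r"
    by (simp add: vals r_def)
  have mz: "al (fst z, snd z) * r1 (fst z, snd z) * v1 (fst z, snd z) + (1 - al (fst z, snd z)) * r2 (fst z, snd z) * v2 (fst z, snd z) = m"
    by (simp add: vals m_def)
  have X1raw: "pdx (\<lambda>z. al z * (al z * r1 z + (1 - al z) * r2 z)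
              * ((al z * r1 z * v1 z + (1 - al z) * r2 z * v2 z) / (al z * r1 z + (1 - al z) * r2 z))) z
     = (aX * r + rX * a) * (m / r) + ((mX * r - m * rX) / (r * r)) * (a * r)"
  proof (rule pdx_eq)
    have "al (fst z, snd z) * r1 (fst z, snd z) + (1 - al (fst z, snd z)) * r2 (fst z, snd z) \<noteq> 0" using r0 rz by simp
    note D = DERIV_mult[OF DERIV_mult[OF Ax Rx] DERIV_divide[OF Mx Rx this]]
    have av: "al (fst z, snd z) = a" "r1 (fst z, snd z) = b" "r2 (fst z, snd z) = c" "v1 (fst z, snd z) = v" "v2 (fst z, snd z) = w"
      by (simp_all add: a_def b_def c_def v_def w_def)
    show "((\<lambda>y. al (fst z, y) * (al (fst z, y) * r1 (fst z, y) + (1 - al (fst z, y)) * r2 (fst z, y))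
              * ((al (fst z, y) * r1 (fst z, y) * v1 (fst z, y) + (1 - al (fst z, y)) * r2 (fst z, y) * v2 (fst z, y))
              / (al (fst z, y) * r1 (fst z, y) + (1 - al (fst z, y)) * r2 (fst z, y))))
           has_real_derivative (aX * r + rX * a) * (m / r) + ((mX * r - m * rX) / (r * r)) * (a * r)) (at (snd z))"
      using D unfolding r_def m_def by (simp only: av)
  qed
  have X1: "pdx (\<lambda>z. al z * (al z * r1 z + (1 - al z) * r2 z)
              * ((al z * r1 z * v1 z + (1 - al z) * r2 z * v2 z) / (al z * r1 z + (1 - al z) * r2 z))) z
     = aX*m + a*mX"
    unfolding X1raw using r0 by (simp add: field_simps)
  have T2: "pdt (\<lambda>z. al z * r1 z) z = aT*b + a*bT"
    by (rule pdt_eq) (auto intro!: derivative_eq_intros At Bt simp: vals algebra_simps)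
  have X2: "pdx (\<lambda>z. al z * r1 z * v1 z) z = aX*b * v + a*bX* v + a*b * vX"
    by (rule pdx_eq) (auto intro!: derivative_eq_intros Ax Bx Vx simp: vals algebra_simps)
  have T3: "pdt (\<lambda>z. al z * r1 z + (1 - al z) * r2 z) z = aT*b + a*bT - aT*c + (1-a)*cT"
    by (rule pdt_eq) (auto intro!: derivative_eq_intros At Bt Ct simp: vals algebra_simps)
  have X3: "pdx (\<lambda>z. al z * r1 z * v1 z + (1 - al z) * r2 z * v2 z) z
      = aX*b * v + a*bX* v + a*b * vX - aX*c*w + (1-a)*cX*w + (1-a)*c*wX"
    by (rule pdx_eq) (auto intro!: derivative_eq_intros Ax Bx Cx Vx Wx simp: vals algebra_simps)
  have T4: "pdt (\<lambda>z. al z * r1 z * v1 z + (1 - al z) * r2 z * v2 z) z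
      = aT*b * v + a*bT* v + a*b * vT - aT*c*w + (1-a)*cT*w + (1-a)*c*wT"
    by (rule pdt_eq) (auto intro!: derivative_eq_intros At Bt Ct Vt Wt simp: vals algebra_simps)
  have X4: "pdx (\<lambda>z. al z * r1 z * (v1 z)^2 + (1 - al z) * r2 z * (v2 z)^2
                + al z * p1 (r1 z) + (1 - al z) * p2 (r2 z)) z
      = aX * b * v^2 + a * bX * v^2 + 2 * a * b * v * vX - aX * c * w^2 + (1-a) * cX * w^2 + 2 * (1-a) * c * w * wX
        + aX*P1 + a*K1*bX - aX*P2 + (1-a)*K2*cX"
    by (rule pdx_eq) (auto intro!: derivative_eq_intros Ax Bx Cx Vx Wx P1x P2x simp: vals P1_def P2_def algebra_simps power2_eq_square)
  have T5: "pdt (\<lambda>z. v1 z - v2 z) z = vT - wT"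
    by (rule pdt_eq) (auto intro!: derivative_eq_intros Vt Wt)
  have X5: "pdx (\<lambda>z. (v1 z)^2 / 2 - (v2 z)^2 / 2 + Psi p1 phi1 (r1 z) - Psi p2 phi2 (r2 z)) z
      = v * vX - w*wX + K1/b*bX - K2/c*cX"
    by (rule pdx_eq) (auto intro!: derivative_eq_intros Vx Wx S1x S2x simp: vals algebra_simps power2_eq_square)
  have e1: "aT*r + a*(aT*b + a*bT - aT*c + (1-a)*cT) + (aX*m + a*mX) = 0" using eq1 T1 X1 by simp
  have e2: "aT*b + a*bT + (aX*b* v + a*bX* v + a*b* vX) = 0" using eq2 T2 X2 by simp
  have e3: "aT*b + a*bT - aT*c + (1-a)*cT + mX = 0" using eq3 T3 X3 unfolding mX_def by simp
  have e4: "aT*b* v + a*bT* v + a*b* vT - aT*c*w + (1-a)*cT*w + (1-a)*c*wT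
      + (aX * b * v^2 + a * bX * v^2 + 2 * a * b * v * vX - aX * c * w^2 + (1-a) * cX * w^2 + 2 * (1-a) * c * w * wX
        + aX*P1 + a*K1*bX - aX*P2 + (1-a)*K2*cX) = 0" using eq4 T4 X4 by simp
  have e5: "vT - wT + (v * vX - w*wX + K1/b*bX - K2/c*cX) = 0" using eq5 T5 X5 by simp
  have rne: "r \<noteq> 0" using r0 by simp
  have C0: "aT*r + aX*m = 0"
  proof -
    have "aT*r + aX*m = (aT*r + a*(aT*b + a*bT - aT*c + (1-a)*cT) + (aX*m + a*mX)) - a*(aT*b + a*bT - aT*c + (1-a)*cT + mX)"
      by (simp add: algebra_simps)
    then show ?thesis using e1 e3 by simp
  qed
  have C1: "aT + u * aX = 0"
  proof -
    have "aT + u * aX = (aT*r + aX*m) / r" unfolding u_def using rne by (simp add: field_simps)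
    then show ?thesis using C0 by simp
  qed
  have C2: "bT + b / a * (v - u) * aX + v * bX + b * vX = 0"
  proof -
    have "bT + b / a * (v - u) * aX + v * bX + b * vX
        = ((aT*b + a*bT + (aX*b* v + a*bX* v + a*b* vX)) - b * (aT + u * aX)) / a"
      using a0 by (simp add: field_simps)
    then show ?thesis using C1 e2 by simp
  qed
  have e3': "- aT*c + (1-a)*cT + (- aX*c*w + (1-a)*cX*w + (1-a)*c*wX) = 0"
  proof -
    have "- aT*c + (1-a)*cT + (- aX*c*w + (1-a)*cX*w + (1-a)*c*wX)
       = (aT*b + a*bT - aT*c + (1-a)*cT + mX) - (aT*b + a*bT + (aX*b* v + a*bX* v + a*b* vX))"
      unfolding mX_def by (simp add: algebra_simps)
    then show ?thesis using e2 e3 by simp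
  qed
  have C3: "cT + c / (1 - a) * (u - w) * aX + w * cX + c * wX = 0"
  proof -
    have "cT + c / (1 - a) * (u - w) * aX + w * cX + c * wX
        = ((- aT*c + (1-a)*cT + (- aX*c*w + (1-a)*cX*w + (1-a)*c*wX)) + c * (aT + u * aX)) / (1 - a)"
      using a1 by (simp add: field_simps)
    then show ?thesis using C1 e3' by simp
  qed
  define Dv where "Dv = vT + v * vX"
  define Dw where "Dw = wT + w * wX"
  have H4: "a*b*Dv + (1-a)*c*Dw + (P1-P2)*aX + a*K1*bX + (1-a)*K2*cX = 0"
  proof -
    have "a*b*Dv + (1-a)*c*Dw + (P1-P2)*aX + a*K1*bX + (1-a)*K2*cX
       = (aT*b* v + a*bT* v + a*b* vT - aT*c*w + (1-a)*cT*w + (1-a)*c*wT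
      + (aX * b * v^2 + a * bX * v^2 + 2 * a * b * v * vX - aX * c * w^2 + (1-a) * cX * w^2 + 2 * (1-a) * c * w * wX
        + aX*P1 + a*K1*bX - aX*P2 + (1-a)*K2*cX))
         - v * (aT*b + a*bT + (aX*b* v + a*bX* v + a*b* vX))
         - w * (- aT*c + (1-a)*cT + (- aX*c*w + (1-a)*cX*w + (1-a)*c*wX))"
      unfolding Dv_def Dw_def by (simp add: algebra_simps power2_eq_square)
    then show ?thesis using e2 e3' e4 by simp
  qed
  have H5: "Dv - Dw + K1/b*bX - K2/c*cX = 0" using e5 unfolding Dv_def Dw_def by (simp add: algebra_simps)
  have C4: "vT + (P1 - P2) / r * aX + K1 / b * bX + v * vX = 0"
  proof -
    have s1: "r * (vT + (P1 - P2) / r * aX + K1 / b * bX + v * vX) = r*Dv + (P1-P2)*aX + r*(K1/b*bX)"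
      using rne unfolding Dv_def by (simp add: field_simps)
    have s2: "r*Dv + (P1-P2)*aX + r*(K1/b*bX)
       = (a*b*Dv + (1-a)*c*Dw + (P1-P2)*aX + a*K1*bX + (1-a)*K2*cX) + (1-a)*c*(Dv - Dw + K1/b*bX - K2/c*cX)"
      unfolding r_def using b0 c0 by (simp add: field_simps)
    have "r * (vT + (P1 - P2) / r * aX + K1 / b * bX + v * vX) = 0" using s1 s2 H4 H5 by simp
    then show ?thesis using rne by simp
  qed
  have C5: "wT + (P1 - P2) / r * aX + K2 / c * cX + w * wX = 0"
  proof -
    have s1: "r * (wT + (P1 - P2) / r * aX + K2 / c * cX + w * wX) = r*Dw + (P1-P2)*aX + r*(K2/c*cX)"
      using rne unfolding Dw_def by (simp add: field_simps)
    have s2: "r*Dw + (P1-P2)*aX + r*(K2/c*cX)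
       = (a*b*Dv + (1-a)*c*Dw + (P1-P2)*aX + a*K1*bX + (1-a)*K2*cX) - a*b*(Dv - Dw + K1/b*bX - K2/c*cX)"
      unfolding r_def using b0 c0 by (simp add: field_simps)
    have "r * (wT + (P1 - P2) / r * aX + K2 / c * cX + w * wX) = 0" using s1 s2 H4 H5 by simp
    then show ?thesis using rne by simp
  qed
  have PT: "pdt (\<lambda>z. vector [al z, r1 z, r2 z, v1 z, v2 z]) z = (vector [aT, bT, cT, vT, wT] :: real^5)"
    unfolding pdt_def by (rule vector_derivative_at) (use vec_hvd[OF At Bt Ct Vt Wt] in simp)
  have PX: "pdx (\<lambda>z. vector [al z, r1 z, r2 z, v1 z, v2 z]) z = (vector [aX, bX, cX, vX, wX] :: real^5)"
    unfolding pdx_def by (rule vector_derivative_at) (use vec_hvd[OF Ax Bx Cx Vx Wx] in simp)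
  have sq1: "(snd_speed p1 b)^2 = K1" unfolding K1_def using snd_speed_sq mono1 b_def by blast
  have sq2: "(snd_speed p2 c)^2 = K2" unfolding K2_def using snd_speed_sq mono2 c_def by blast
  have AZ: "Amat p1 p2 (vector [al z, r1 z, r2 z, v1 z, v2 z]) = vector [
       vector [u, 0, 0, 0, 0],
       vector [b / a * (v - u), v, 0, b, 0],
       vector [c / (1 - a) * (u - w), 0, w, 0, c],
       vector [(P1 - P2) / r, K1 / b, 0, v, 0],
       vector [(P1 - P2) / r, 0, K2 / c, 0, w]]"
    unfolding Amat_def Let_def mix_u_def mix_rho_def vector_5 vals u_def m_def r_def P1_def P2_def sq1 sq2 ..
  show ?thesis
    unfolding vec5_eq AZ PT PX
    using C1 C2 C3 C4 C5 by (simp add: mv5)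
qed


theorem mainTheorem1:
  fixes p1 p2 phi1 phi2 :: "real \<Rightarrow> real"
    and Omega :: "(real \<times> real) set"
    and al r1 r2 v1 v2 :: "real \<times> real \<Rightarrow> real"
  assumes p1_smooth: "\<And>n r. r > 0 \<Longrightarrow> ((deriv ^^ n) p1) differentiable (at r)"
    and p2_smooth: "\<And>n r. r > 0 \<Longrightarrow> ((deriv ^^ n) p2) differentiable (at r)"
    and p1_mono: "\<And>r. r > 0 \<Longrightarrow> deriv p1 r > 0"
    and p2_mono: "\<And>r. r > 0 \<Longrightarrow> deriv p2 r > 0"
    and phi1: "\<And>r. r > 0 \<Longrightarrow> (phi1 has_real_derivative p1 r / r^2) (at r)"
    and phi2: "\<And>r. r > 0 \<Longrightarrow> (phi2 has_real_derivative p2 r / r^2) (at r)"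
    and Omega_open: "open Omega"
    and smooth_sol: "smooth2_on Omega al" "smooth2_on Omega r1" "smooth2_on Omega r2"
                    "smooth2_on Omega v1" "smooth2_on Omega v2"
    and ranges: "\<And>z. z \<in> Omega \<Longrightarrow> 0 < al z \<and> al z < 1 \<and> 0 < r1 z \<and> 0 < r2 z"
    and eq1: "\<And>z. z \<in> Omega \<Longrightarrow>
       pdt (\<lambda>z. al z * (al z * r1 z + (1 - al z) * r2 z)) z
     + pdx (\<lambda>z. al z * (al z * r1 z + (1 - al z) * r2 z)
              * ((al z * r1 z * v1 z + (1 - al z) * r2 z * v2 z) / (al z * r1 z + (1 - al z) * r2 z))) z = 0"
    and eq2: "\<And>z. z \<in> Omega \<Longrightarrow>
       pdt (\<lambda>z. al z * r1 z) z + pdx (\<lambda>z. al z * r1 z * v1 z) z = 0"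
    and eq3: "\<And>z. z \<in> Omega \<Longrightarrow>
       pdt (\<lambda>z. al z * r1 z + (1 - al z) * r2 z) z
     + pdx (\<lambda>z. al z * r1 z * v1 z + (1 - al z) * r2 z * v2 z) z = 0"
    and eq4: "\<And>z. z \<in> Omega \<Longrightarrow>
       pdt (\<lambda>z. al z * r1 z * v1 z + (1 - al z) * r2 z * v2 z) z
     + pdx (\<lambda>z. al z * r1 z * (v1 z)^2 + (1 - al z) * r2 z * (v2 z)^2
                + al z * p1 (r1 z) + (1 - al z) * p2 (r2 z)) z = 0"
    and eq5: "\<And>z. z \<in> Omega \<Longrightarrow>
       pdt (\<lambda>z. v1 z - v2 z) z
     + pdx (\<lambda>z. (v1 z)^2 / 2 - (v2 z)^2 / 2 + Psi p1 phi1 (r1 z) - Psi p2 phi2 (r2 z)) z = 0"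
  shows "(\<forall>z\<in>Omega.
            pdt (\<lambda>z. vector [al z, r1 z, r2 z, v1 z, v2 z]) z
          + Amat p1 p2 (vector [al z, r1 z, r2 z, v1 z, v2 z])
              *v pdx (\<lambda>z. vector [al z, r1 z, r2 z, v1 z, v2 z]) z = (0 :: real^5))
       \<and> (\<forall>W::real^5. admissible W \<longrightarrow>
            (\<forall>s\<in>{-1, 1::real}.
                Amat p1 p2 W *v R1 p1 s W = (W$4 + s * snd_speed p1 (W$2)) *s R1 p1 s W
              \<and> Amat p1 p2 W *v R2 p2 s W = (W$5 + s * snd_speed p2 (W$3)) *s R2 p2 s W)
          \<and> Amat p1 p2 W *v RC p1 p2 W = mix_u W *s RC p1 p2 W
          \<and> (\<forall>s\<in>{-1, 1::real}.
                lam1 p1 s differentiable (at W)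
              \<and> frechet_derivative (lam1 p1 s) (at W) (R1 p1 s W)
                  = s * (1 / W$2) * deriv (\<lambda>r. r * snd_speed p1 r) (W$2)
              \<and> lam2 p2 s differentiable (at W)
              \<and> frechet_derivative (lam2 p2 s) (at W) (R2 p2 s W)
                  = s * (1 / W$3) * deriv (\<lambda>r. r * snd_speed p2 r) (W$3))
          \<and> lamC differentiable (at W)
          \<and> frechet_derivative lamC (at W) (RC p1 p2 W) = 0)"
  proof (rule conjI)
  show "\<forall>z\<in>Omega.
            pdt (\<lambda>z. vector [al z, r1 z, r2 z, v1 z, v2 z]) z
          + Amat p1 p2 (vector [al z, r1 z, r2 z, v1 z, v2 z])
              *v pdx (\<lambda>z. vector [al z, r1 z, r2 z, v1 z, v2 z]) z = (0 :: real^5)"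
  proof
  fix z assume z: "z \<in> Omega"
  have rg: "0 < al z \<and> al z < 1 \<and> 0 < r1 z \<and> 0 < r2 z" using ranges[OF z] .
  have dp1: "p1 differentiable (at (r1 z))" using p1_smooth[of "r1 z" 0] rg by simp
  have dp2: "p2 differentiable (at (r2 z))" using p2_smooth[of "r2 z" 0] rg by simp
  show "pdt (\<lambda>z. vector [al z, r1 z, r2 z, v1 z, v2 z]) z
          + Amat p1 p2 (vector [al z, r1 z, r2 z, v1 z, v2 z])
              *v pdx (\<lambda>z. vector [al z, r1 z, r2 z, v1 z, v2 z]) z = (0 :: real^5)"
    by (rule pde_point[OF smooth_diff[OF smooth_sol(1) z] smooth_diff[OF smooth_sol(2) z]
        smooth_diff[OF smooth_sol(3) z] smooth_diff[OF smooth_sol(4) z] smooth_diff[OF smooth_sol(5) z]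
        dp1 dp2 p1_mono p2_mono phi1 phi2 rg eq1[OF z] eq2[OF z] eq3[OF z] eq4[OF z] eq5[OF z]])
      (use rg in auto)
  qed
next
  show "\<forall>W::real^5. admissible W \<longrightarrow> (\<forall>s\<in>{-1, 1::real}.
                Amat p1 p2 W *v R1 p1 s W = (W$4 + s * snd_speed p1 (W$2)) *s R1 p1 s W
              \<and> Amat p1 p2 W *v R2 p2 s W = (W$5 + s * snd_speed p2 (W$3)) *s R2 p2 s W)
          \<and> Amat p1 p2 W *v RC p1 p2 W = mix_u W *s RC p1 p2 W
          \<and> (\<forall>s\<in>{-1, 1::real}.
                lam1 p1 s differentiable (at W)
              \<and> frechet_derivative (lam1 p1 s) (at W) (R1 p1 s W)
                  = s * (1 / W$2) * deriv (\<lambda>r. r * snd_speed p1 r) (W$2)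
              \<and> lam2 p2 s differentiable (at W)
              \<and> frechet_derivative (lam2 p2 s) (at W) (R2 p2 s W)
                  = s * (1 / W$3) * deriv (\<lambda>r. r * snd_speed p2 r) (W$3))
          \<and> lamC differentiable (at W)
          \<and> frechet_derivative lamC (at W) (RC p1 p2 W) = 0"
  proof (intro allI impI)
  fix W :: "real^5" assume adm: "admissible W"
  show "(\<forall>s\<in>{-1, 1::real}.
                Amat p1 p2 W *v R1 p1 s W = (W$4 + s * snd_speed p1 (W$2)) *s R1 p1 s W
              \<and> Amat p1 p2 W *v R2 p2 s W = (W$5 + s * snd_speed p2 (W$3)) *s R2 p2 s W)
          \<and> Amat p1 p2 W *v RC p1 p2 W = mix_u W *s RC p1 p2 W
          \<and> (\<forall>s\<in>{-1, 1::real}.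
                lam1 p1 s differentiable (at W)
              \<and> frechet_derivative (lam1 p1 s) (at W) (R1 p1 s W)
                  = s * (1 / W$2) * deriv (\<lambda>r. r * snd_speed p1 r) (W$2)
              \<and> lam2 p2 s differentiable (at W)
              \<and> frechet_derivative (lam2 p2 s) (at W) (R2 p2 s W)
                  = s * (1 / W$3) * deriv (\<lambda>r. r * snd_speed p2 r) (W$3))
          \<and> lamC differentiable (at W)
          \<and> frechet_derivative lamC (at W) (RC p1 p2 W) = 0"
    by (rule W_part[OF p1_smooth p2_smooth p1_mono p2_mono adm])
  qed
qed

end
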